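(* Let $\mathcal{R}$ be a cell space with finite stabiliser $G_0$, let $F,F'$ be finite subsets of $M$ and let $\mathfrak{g},\mathfrak{g}'\in G/G_0$. Then $|(\cdot\triangleleft\mathfrak{g})^{-1}(F)\setminus(\cdot\triangleleft\mathfrak{g}')^{-1}(F')|\leq|G_0|^2\cdot\max_{g\in\mathfrak{g}}|F\setminus(\cdot\triangleleft g^{-1}\cdot\mathfrak{g}')^{-1}(F')|$ and $|(\cdot\triangleleft\mathfrak{g})^{-1}(F)\setminus(\cdot\triangleleft\mathfrak{g}')^{-1}(F')|\leq|G_0|^2\cdot\max_{g'\in\mathfrak{g}'}|(\cdot\triangleleft(g')^{-1}\cdot\mathfrak{g})^{-1}(F)\setminus F'|$.
   Context: A cell space $\mathcal{R}$ consists of a group $G$ acting transitively on the left on a nonempty set $M$ via $\triangleright$, a point $m_0\in M$ and a family $(g_{m_0,m})_{m\in M}$ in $G$ with $g_{m_0,m}\triangleright m_0=m$. $G_0$ is the stabiliser of $m_0$, $G/G_0$ the set of left cosets (elements are subsets of $G$), with $G$ acting by $g\cdot hG_0=ghG_0$. The right semi-action $\triangleleft\colon M\times G/G_0\to M$ is $m\triangleleft gG_0=g_{m_0,m}g\triangleright m_0$, and $(\cdot\triangleleft\mathfrak{h})^{-1}(B)=\{m\in M: m\triangleleft\mathfrak{h}\in B\}$. *)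

theory Defs
  imports "HOL-Algebra.Group_Action"
begin

definition cell_space ::
  "('g, 'b) monoid_scheme \<Rightarrow> 'm set \<Rightarrow> ('g \<Rightarrow> 'm \<Rightarrow> 'm) \<Rightarrow> 'm \<Rightarrow> ('m \<Rightarrow> 'g) \<Rightarrow> bool" where
  "cell_space G M act m0 gm \<longleftrightarrow>
     group G \<and> transitive_action G M act \<and> M \<noteq> {} \<and> m0 \<in> M \<and>
     (\<forall>m\<in>M. gm m \<in> carrier G \<and> act (gm m) m0 = m)"

definition cell_cosets ::
  "('g, 'b) monoid_scheme \<Rightarrow> ('g \<Rightarrow> 'm \<Rightarrow> 'm) \<Rightarrow> 'm \<Rightarrow> 'g set set" where
  "cell_cosets G act m0 = {g <#\<^bsub>G\<^esub> stabilizer G act m0 | g. g \<in> carrier G}"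

text \<open>Right semi-action m \<triangleleft> gG_0 = g_{m0,m} g \<triangleright> m0 (well-defined on cosets;
  we evaluate at an arbitrary representative of the coset).\<close>
definition semi_act ::
  "('g, 'b) monoid_scheme \<Rightarrow> ('g \<Rightarrow> 'm \<Rightarrow> 'm) \<Rightarrow> 'm \<Rightarrow> ('m \<Rightarrow> 'g) \<Rightarrow> 'm \<Rightarrow> 'g set \<Rightarrow> 'm" where
  "semi_act G act m0 gm m C = act (gm m \<otimes>\<^bsub>G\<^esub> (SOME g. g \<in> C)) m0"

definition semi_preimage ::
  "('g, 'b) monoid_scheme \<Rightarrow> 'm set \<Rightarrow> ('g \<Rightarrow> 'm \<Rightarrow> 'm) \<Rightarrow> 'm \<Rightarrow> ('m \<Rightarrow> 'g) \<Rightarrow> 'g set \<Rightarrow> 'm set \<Rightarrow> 'm set" where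
  "semi_preimage G M act m0 gm C B = {m \<in> M. semi_act G act m0 gm m C \<in> B}"

end

theory Submission
  imports Defs
begin

locale cs_loc =
  fixes G :: "('g, 'b) monoid_scheme" (structure) and M :: "'m set" and act :: "'g \<Rightarrow> 'm \<Rightarrow> 'm"
    and m0 :: 'm and gm :: "'m \<Rightarrow> 'g"
  assumes cs: "cell_space G M act m0 gm"
begin

abbreviation "H \<equiv> stabilizer G act m0"

lemma grp: "group G" using cs unfolding cell_space_def by auto
lemma ga: "group_action G M act" using cs unfolding cell_space_def transitive_action_def by auto
lemma m0M: "m0 \<in> M" using cs unfolding cell_space_def by auto
lemma gmC: "m \<in> M \<Longrightarrow> gm m \<in> carrier G" using cs unfolding cell_space_def by auto
lemma gmA: "m \<in> M \<Longrightarrow> act (gm m) m0 = m" using cs unfolding cell_space_def by auto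

lemma sub: "subgroup H G" using group_action.stabilizer_subgroup[OF ga m0M] .
lemma HC: "H \<subseteq> carrier G" using sub subgroup.subset by blast
lemma Hfix: "h \<in> H \<Longrightarrow> act h m0 = m0" unfolding stabilizer_def by auto

lemma img: "g \<in> carrier G \<Longrightarrow> x \<in> M \<Longrightarrow> act g x \<in> M"
  using group_action.element_image[OF ga] by blast
lemma comp: "g1 \<in> carrier G \<Longrightarrow> g2 \<in> carrier G \<Longrightarrow> x \<in> M \<Longrightarrow> act (g1 \<otimes> g2) x = act g1 (act g2 x)"
  using group_action.composition_rule[OF ga] by blast

lemma semi_coset:
  assumes "g \<in> carrier G" "m \<in> M"
  shows "semi_act G act m0 gm m (g <# H) = act (gm m \<otimes> g) m0"
proof -
  interpret group G by (rule grp)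
  have "g \<in> g <# H" using assms sub unfolding l_coset_def
    by (auto intro!: bexI[of _ "\<one>"] subgroup.one_closed)
  hence "(SOME k. k \<in> g <# H) \<in> g <# H" by (rule someI)
  then obtain h where h: "h \<in> H" "(SOME k. k \<in> g <# H) = g \<otimes> h" unfolding l_coset_def by auto
  have hc: "h \<in> carrier G" using h HC by auto
  have "act (gm m \<otimes> (g \<otimes> h)) m0 = act ((gm m \<otimes> g) \<otimes> h) m0"
    using assms hc gmC by (simp add: m_assoc)
  also have "\<dots> = act (gm m \<otimes> g) (act h m0)" using comp assms hc gmC m0M by simp
  also have "\<dots> = act (gm m \<otimes> g) m0" using Hfix h by simp
  finally show ?thesis unfolding semi_act_def h by simp
qed

lemma fiber:
  assumes "k \<in> carrier G" "n \<in> M"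
  shows "{m \<in> M. act (gm m \<otimes> k) m0 = n} \<subseteq> (\<lambda>h. act (gm n \<otimes> h \<otimes> inv k) m0) ` H"
proof
  interpret group G by (rule grp)
  fix m assume "m \<in> {m \<in> M. act (gm m \<otimes> k) m0 = n}"
  hence m: "m \<in> M" "act (gm m \<otimes> k) m0 = n" by auto
  define h where "h = inv (gm n) \<otimes> (gm m \<otimes> k)"
  have c: "gm n \<in> carrier G" "gm m \<in> carrier G" using gmC m assms by auto
  have hc: "h \<in> carrier G" unfolding h_def using c assms by simp
  have "act h m0 = act (inv (gm n)) (act (gm m \<otimes> k) m0)"
    unfolding h_def using comp c assms m0M by simp
  also have "\<dots> = act (inv (gm n)) (act (gm n) m0)" using m gmA assms by simp
  also have "\<dots> = m0"
  proof -
    have e1: "act (inv (gm n) \<otimes> gm n) m0 = act (inv (gm n)) (act (gm n) m0)"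
      by (rule comp) (use c m0M in auto)
    have "act \<one> m0 = m0" using m0M group_action.id_eq_one[OF ga] by (metis restrict_apply')
    hence "act (inv (gm n) \<otimes> gm n) m0 = m0" using c by (simp add: l_inv)
    thus ?thesis using e1 by simp
  qed
  finally have hH: "h \<in> H" unfolding stabilizer_def using hc by auto
  have "gm n \<otimes> h \<otimes> inv k = gm m" unfolding h_def using c assms
    by (simp add: m_assoc[symmetric] r_inv) (simp add: m_assoc)
  hence "act (gm n \<otimes> h \<otimes> inv k) m0 = m" using gmA m by simp
  thus "m \<in> (\<lambda>h. act (gm n \<otimes> h \<otimes> inv k) m0) ` H" using hH by force
qed

lemma count:
  assumes "k \<in> carrier G" "finite S" "S \<subseteq> M" "finite H"
  shows "finite {m \<in> M. act (gm m \<otimes> k) m0 \<in> S} \<and> card {m \<in> M. act (gm m \<otimes> k) m0 \<in> S} \<le> card H * card S"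
proof -
  have sub1: "{m \<in> M. act (gm m \<otimes> k) m0 \<in> S} \<subseteq> (\<Union>n\<in>S. (\<lambda>h. act (gm n \<otimes> h \<otimes> inv k) m0) ` H)"
    using fiber[OF assms(1)] assms(3) by blast
  have fin: "finite (\<Union>n\<in>S. (\<lambda>h. act (gm n \<otimes> h \<otimes> inv k) m0) ` H)" using assms by auto
  have "card {m \<in> M. act (gm m \<otimes> k) m0 \<in> S} \<le> card (\<Union>n\<in>S. (\<lambda>h. act (gm n \<otimes> h \<otimes> inv k) m0) ` H)"
    by (rule card_mono[OF fin sub1])
  also have "\<dots> \<le> (\<Sum>n\<in>S. card ((\<lambda>h. act (gm n \<otimes> h \<otimes> inv k) m0) ` H))" by (rule card_UN_le[OF assms(2)])
  also have "\<dots> \<le> (\<Sum>n\<in>S. card H)" by (rule sum_mono) (rule card_image_le[OF assms(4)])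
  finally show ?thesis using finite_subset[OF sub1 fin] by (simp add: mult.commute)
qed


lemma core:
  assumes "k \<in> carrier G" "l \<in> carrier G" "m \<in> M"
  shows "\<exists>a\<in>k <# H. act (gm (act (gm m \<otimes> k) m0) \<otimes> (inv a \<otimes> l)) m0 = act (gm m \<otimes> l) m0"
proof -
  interpret group G by (rule grp)
  define n where "n = act (gm m \<otimes> k) m0"
  have nM: "n \<in> M" unfolding n_def using img gmC assms m0M by simp
  have c: "gm n \<in> carrier G" "gm m \<in> carrier G" using gmC nM assms by auto
  define h' where "h' = inv (gm n) \<otimes> (gm m \<otimes> k)"
  have h'c: "h' \<in> carrier G" unfolding h'_def using c assms by simp
  have "act h' m0 = act (inv (gm n)) (act (gm m \<otimes> k) m0)"
    unfolding h'_def using comp c assms m0M by simp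
  also have "\<dots> = act (inv (gm n)) (act (gm n) m0)" using gmA[OF nM] unfolding n_def[symmetric] by simp
  also have "\<dots> = m0"
  proof -
    have e1: "act (inv (gm n) \<otimes> gm n) m0 = act (inv (gm n)) (act (gm n) m0)"
      by (rule comp) (use c m0M in auto)
    have "act \<one> m0 = m0" using m0M group_action.id_eq_one[OF ga] by (metis restrict_apply')
    hence "act (inv (gm n) \<otimes> gm n) m0 = m0" using c by (simp add: l_inv)
    thus ?thesis using e1 by simp
  qed
  finally have hH: "h' \<in> H" unfolding stabilizer_def using h'c by auto
  have eq: "gm n \<otimes> h' \<otimes> inv k = gm m" unfolding h'_def using c assms
    by (simp add: m_assoc[symmetric] r_inv) (simp add: m_assoc)
  define a where "a = k \<otimes> inv h'"
  have ihH: "inv h' \<in> H" by (rule subgroup.m_inv_closed[OF sub hH])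
  have aC: "a \<in> k <# H" unfolding a_def l_coset_def by (rule UN_I[OF ihH]) simp
  have "inv a = h' \<otimes> inv k" unfolding a_def using h'c assms by (simp add: inv_mult_group)
  hence "gm n \<otimes> (inv a \<otimes> l) = gm n \<otimes> h' \<otimes> inv k \<otimes> l" using c h'c assms by (simp add: m_assoc)
  also have "\<dots> = gm m \<otimes> l" using eq by simp
  finally have "act (gm n \<otimes> (inv a \<otimes> l)) m0 = act (gm m \<otimes> l) m0" by simp
  with aC show ?thesis unfolding n_def[symmetric] by blast
qed

lemma bound:
  assumes k: "k \<in> carrier G" and fH: "finite H"
    and D: "\<And>a. a \<in> k <# H \<Longrightarrow> finite (D a) \<and> D a \<subseteq> M"
    and X: "X \<subseteq> (\<Union>a\<in>k <# H. {m \<in> M. act (gm m \<otimes> k) m0 \<in> D a})"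
  shows "finite X \<and> card X \<le> card H ^ 2 * Max ((\<lambda>a. card (D a)) ` (k <# H))"
proof -
  interpret group G by (rule grp)
  have cos: "k <# H = (\<lambda>h. k \<otimes> h) ` H" unfolding l_coset_def by auto
  have fc: "finite (k <# H)" using cos fH by simp
  have cc: "card (k <# H) \<le> card H" using cos fH card_image_le by simp
  let ?Mx = "Max ((\<lambda>a. card (D a)) ` (k <# H))"
  have fU: "finite (\<Union>a\<in>k <# H. {m \<in> M. act (gm m \<otimes> k) m0 \<in> D a})"
  proof (rule finite_UN_I[OF fc])
    fix a assume "a \<in> k <# H"
    thus "finite {m \<in> M. act (gm m \<otimes> k) m0 \<in> D a}" using count[OF k _ _ fH, of "D a"] D by blast
  qed
  have "card X \<le> card (\<Union>a\<in>k <# H. {m \<in> M. act (gm m \<otimes> k) m0 \<in> D a})"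
    by (rule card_mono[OF fU X])
  also have "\<dots> \<le> (\<Sum>a\<in>k <# H. card {m \<in> M. act (gm m \<otimes> k) m0 \<in> D a})"
    by (rule card_UN_le[OF fc])
  also have "\<dots> \<le> (\<Sum>a\<in>k <# H. card H * ?Mx)"
  proof (rule sum_mono)
    fix a assume a: "a \<in> k <# H"
    have "card {m \<in> M. act (gm m \<otimes> k) m0 \<in> D a} \<le> card H * card (D a)"
      using count[OF k _ _ fH] D[OF a] by blast
    also have "\<dots> \<le> card H * ?Mx" using a fc by simp
    finally show "card {m \<in> M. act (gm m \<otimes> k) m0 \<in> D a} \<le> card H * ?Mx" .
  qed
  also have "\<dots> = card (k <# H) * (card H * ?Mx)" by simp
  also have "\<dots> \<le> card H * (card H * ?Mx)" using cc by (rule mult_right_mono) simp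
  finally show ?thesis using finite_subset[OF X fU] by (simp add: power2_eq_square)
qed

lemma preim:
  assumes "k \<in> carrier G"
  shows "semi_preimage G M act m0 gm (k <# H) S = {m \<in> M. act (gm m \<otimes> k) m0 \<in> S}"
  unfolding semi_preimage_def using semi_coset[OF assms] by auto

lemma main:
  fixes F F' :: "'m set" and \<gg> \<gg>' :: "'g set"
  assumes fin0: "finite (stabilizer G act m0)"
    and F: "finite F" "F \<subseteq> M"
    and F': "finite F'" "F' \<subseteq> M"
    and g: "\<gg> \<in> cell_cosets G act m0"
    and g': "\<gg>' \<in> cell_cosets G act m0"
  shows "finite (semi_preimage G M act m0 gm \<gg> F - semi_preimage G M act m0 gm \<gg>' F')
       \<and> card (semi_preimage G M act m0 gm \<gg> F - semi_preimage G M act m0 gm \<gg>' F')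
           \<le> card (stabilizer G act m0) ^ 2 *
             Max ((\<lambda>g. card (F - semi_preimage G M act m0 gm (inv\<^bsub>G\<^esub> g <#\<^bsub>G\<^esub> \<gg>') F')) ` \<gg>)
       \<and> card (semi_preimage G M act m0 gm \<gg> F - semi_preimage G M act m0 gm \<gg>' F')
           \<le> card (stabilizer G act m0) ^ 2 *
             Max ((\<lambda>g'. card (semi_preimage G M act m0 gm (inv\<^bsub>G\<^esub> g' <#\<^bsub>G\<^esub> \<gg>) F - F')) ` \<gg>')"
proof -
  interpret group G by (rule grp)
  obtain k where k: "k \<in> carrier G" "\<gg> = k <# H" using g unfolding cell_cosets_def by auto
  obtain l where l: "l \<in> carrier G" "\<gg>' = l <# H" using g' unfolding cell_cosets_def by auto
  have ainv: "\<And>a c. a \<in> carrier G \<Longrightarrow> c \<in> carrier G \<Longrightarrow> inv a <# (c <# H) = (inv a \<otimes> c) <# H"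
    using lcos_m_assoc HC by simp
  have acar: "\<And>a c. c \<in> carrier G \<Longrightarrow> a \<in> c <# H \<Longrightarrow> a \<in> carrier G"
    using l_coset_carrier[OF _ _ sub] by blast
  let ?X = "semi_preimage G M act m0 gm \<gg> F - semi_preimage G M act m0 gm \<gg>' F'"
  have X: "?X = {m \<in> M. act (gm m \<otimes> k) m0 \<in> F \<and> act (gm m \<otimes> l) m0 \<notin> F'}"
    using preim k l by auto
  have r1: "finite ?X \<and> card ?X \<le> card H ^ 2 *
       Max ((\<lambda>a. card (F - semi_preimage G M act m0 gm (inv a <# \<gg>') F')) ` (k <# H))"
  proof (rule bound[OF k(1) fin0])
    fix a assume "a \<in> k <# H"
    thus "finite (F - semi_preimage G M act m0 gm (inv a <# \<gg>') F') \<and> F - semi_preimage G M act m0 gm (inv a <# \<gg>') F' \<subseteq> M"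
      using F by auto
  next
    show "?X \<subseteq> (\<Union>a\<in>k <# H. {m \<in> M. act (gm m \<otimes> k) m0 \<in> F - semi_preimage G M act m0 gm (inv a <# \<gg>') F'})"
    proof
      fix m assume "m \<in> ?X"
      hence m: "m \<in> M" "act (gm m \<otimes> k) m0 \<in> F" "act (gm m \<otimes> l) m0 \<notin> F'" using X by auto
      obtain a where a: "a \<in> k <# H" "act (gm (act (gm m \<otimes> k) m0) \<otimes> (inv a \<otimes> l)) m0 = act (gm m \<otimes> l) m0"
        using core[OF k(1) l(1) m(1)] by blast
      have ac: "a \<in> carrier G" using acar k a by blast
      have "act (gm m \<otimes> k) m0 \<notin> semi_preimage G M act m0 gm (inv a <# \<gg>') F'"
        using a m ac l ainv preim[of "inv a \<otimes> l"] by simp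
      thus "m \<in> (\<Union>a\<in>k <# H. {m \<in> M. act (gm m \<otimes> k) m0 \<in> F - semi_preimage G M act m0 gm (inv a <# \<gg>') F'})"
        using a m by blast
    qed
  qed
  have r2: "finite ?X \<and> card ?X \<le> card H ^ 2 *
       Max ((\<lambda>a. card (semi_preimage G M act m0 gm (inv a <# \<gg>) F - F')) ` (l <# H))"
  proof (rule bound[OF l(1) fin0])
    fix a assume "a \<in> l <# H"
    hence ac: "a \<in> carrier G" using acar l by blast
    have "finite (semi_preimage G M act m0 gm (inv a <# \<gg>) F)"
      using ainv[OF ac k(1)] k preim[of "inv a \<otimes> k"] count[OF _ F fin0, of "inv a \<otimes> k"] ac by simp
    thus "finite (semi_preimage G M act m0 gm (inv a <# \<gg>) F - F') \<and> semi_preimage G M act m0 gm (inv a <# \<gg>) F - F' \<subseteq> M"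
      unfolding semi_preimage_def by auto
  next
    show "?X \<subseteq> (\<Union>a\<in>l <# H. {m \<in> M. act (gm m \<otimes> l) m0 \<in> semi_preimage G M act m0 gm (inv a <# \<gg>) F - F'})"
    proof
      fix m assume "m \<in> ?X"
      hence m: "m \<in> M" "act (gm m \<otimes> k) m0 \<in> F" "act (gm m \<otimes> l) m0 \<notin> F'" using X by auto
      obtain a where a: "a \<in> l <# H" "act (gm (act (gm m \<otimes> l) m0) \<otimes> (inv a \<otimes> k)) m0 = act (gm m \<otimes> k) m0"
        using core[OF l(1) k(1) m(1)] by blast
      have ac: "a \<in> carrier G" using acar l a by blast
      have nM: "act (gm m \<otimes> l) m0 \<in> M" using img gmC m l m0M by simp
      have "act (gm m \<otimes> l) m0 \<in> semi_preimage G M act m0 gm (inv a <# \<gg>) F"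
        using a m ac k ainv preim[of "inv a \<otimes> k"] nM by simp
      thus "m \<in> (\<Union>a\<in>l <# H. {m \<in> M. act (gm m \<otimes> l) m0 \<in> semi_preimage G M act m0 gm (inv a <# \<gg>) F - F'})"
        using a m by blast
    qed
  qed
  show ?thesis using r1 r2 k l by simp
qed

end

theorem lemma6:
  fixes G :: "('g, 'b) monoid_scheme" and M :: "'m set" and act :: "'g \<Rightarrow> 'm \<Rightarrow> 'm"
    and m0 :: 'm and gm :: "'m \<Rightarrow> 'g"
    and F F' :: "'m set" and \<gg> \<gg>' :: "'g set"
  assumes cs: "cell_space G M act m0 gm"
    and fin0: "finite (stabilizer G act m0)"
    and F: "finite F" "F \<subseteq> M"
    and F': "finite F'" "F' \<subseteq> M"
    and g: "\<gg> \<in> cell_cosets G act m0"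
    and g': "\<gg>' \<in> cell_cosets G act m0"
  shows "finite (semi_preimage G M act m0 gm \<gg> F - semi_preimage G M act m0 gm \<gg>' F')
       \<and> card (semi_preimage G M act m0 gm \<gg> F - semi_preimage G M act m0 gm \<gg>' F')
           \<le> card (stabilizer G act m0) ^ 2 *
             Max ((\<lambda>g. card (F - semi_preimage G M act m0 gm (inv\<^bsub>G\<^esub> g <#\<^bsub>G\<^esub> \<gg>') F')) ` \<gg>)
       \<and> card (semi_preimage G M act m0 gm \<gg> F - semi_preimage G M act m0 gm \<gg>' F')
           \<le> card (stabilizer G act m0) ^ 2 *
             Max ((\<lambda>g'. card (semi_preimage G M act m0 gm (inv\<^bsub>G\<^esub> g' <#\<^bsub>G\<^esub> \<gg>) F - F')) ` \<gg>')"
  using cs_loc.main[OF cs_loc.intro[OF cs] fin0 F F' g g'] .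

end
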